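(* Let $(\mathsf{C},\otimes,I)$ be an additive symmetric monoidal category and $A$ an object. For all $n\ge1$ and $0\le k\le n-1$, $\mathsf{unsh}(n+1,k+1)_A=\mathsf{unsh}(n,k+1)_A\otimes 1_A+\mathsf{unsh}(n,k)_A\otimes 1_A;1_{A^{\otimes k}}\otimes\gamma_{A^{\otimes(n-k)},A}$ as morphisms $A^{\otimes(n+1)}\to A^{\otimes(n+1)}$.
   Context: Composition is written $f;g$ (first $f$ then $g$); the monoidal structure is treated as strict, $\gamma$ is the symmetry. An additive symmetric monoidal category is a symmetric monoidal category whose hom-sets are commutative monoids with composition and $\otimes$ preserving $0$ and $+$ in each argument. For $\sigma\in S_n$, $\overline{\sigma}_{A,\dots,A}\colon A^{\otimes n}\to A^{\otimes n}$ is the canonical symmetry isomorphism moving the $i$-th factor to position $\sigma(i)$ (identity for $n\le1$). A $(k,l)$-unshuffle is a permutation $\sigma\in S_{k+l}$ with $\sigma^{-1}(1)<\dots<\sigma^{-1}(k)$ and $\sigma^{-1}(k+1)<\dots<\sigma^{-1}(k+l)$; $\mathsf{Unsh}(n,k)$ is the set of $(k,n-k)$-unshuffles and $\mathsf{unsh}(n,k)_A:=\sum_{\sigma\in\mathsf{Unsh}(n,k)}\overline{\sigma}_{A,\dots,A}$. *)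

theory Defs
  imports "HOL-Combinatorics.Permutations"
begin

text \<open>
  Objects are the elements of type 'o; morphisms live in type 'm, and
  hom a b is the set of morphisms a -> b.
  comp f g is diagrammatic composition f;g (first f then g).
  tensO / tensM are the tensor on objects / morphisms, unit is I,
  sym a b is the symmetry a (x) b -> b (x) a.
  Each hom-set is a commutative monoid under the restriction of the
  ambient addition of 'm (0 lies in every hom-set).
\<close>

locale add_sym_mon_cat =
  fixes hom :: "'o \<Rightarrow> 'o \<Rightarrow> 'm::comm_monoid_add set"
    and comp :: "'m \<Rightarrow> 'm \<Rightarrow> 'm"
    and idm :: "'o \<Rightarrow> 'm"
    and tensO :: "'o \<Rightarrow> 'o \<Rightarrow> 'o"
    and tensM :: "'m \<Rightarrow> 'm \<Rightarrow> 'm"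
    and unit :: "'o"
    and sym :: "'o \<Rightarrow> 'o \<Rightarrow> 'm"
  assumes id_hom: "idm a \<in> hom a a"
    and comp_hom: "f \<in> hom a b \<Longrightarrow> g \<in> hom b c \<Longrightarrow> comp f g \<in> hom a c"
    and comp_assoc: "f \<in> hom a b \<Longrightarrow> g \<in> hom b c \<Longrightarrow> h \<in> hom c d \<Longrightarrow>
                       comp (comp f g) h = comp f (comp g h)"
    and id_left: "f \<in> hom a b \<Longrightarrow> comp (idm a) f = f"
    and id_right: "f \<in> hom a b \<Longrightarrow> comp f (idm b) = f"
    and tensO_assoc: "tensO (tensO a b) c = tensO a (tensO b c)"
    and tensO_unit_left: "tensO unit a = a"
    and tensO_unit_right: "tensO a unit = a"
    and tensM_hom: "f \<in> hom a b \<Longrightarrow> g \<in> hom c d \<Longrightarrow> tensM f g \<in> hom (tensO a c) (tensO b d)"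
    and tensM_id: "tensM (idm a) (idm b) = idm (tensO a b)"
    and tensM_comp: "f \<in> hom a b \<Longrightarrow> g \<in> hom b c \<Longrightarrow> h \<in> hom d e \<Longrightarrow> k \<in> hom e e' \<Longrightarrow>
                       tensM (comp f g) (comp h k) = comp (tensM f h) (tensM g k)"
    and tensM_assoc: "f \<in> hom a b \<Longrightarrow> g \<in> hom c d \<Longrightarrow> h \<in> hom e e' \<Longrightarrow>
                       tensM (tensM f g) h = tensM f (tensM g h)"
    and tensM_unit_left: "f \<in> hom a b \<Longrightarrow> tensM (idm unit) f = f"
    and tensM_unit_right: "f \<in> hom a b \<Longrightarrow> tensM f (idm unit) = f"
    and sym_hom: "sym a b \<in> hom (tensO a b) (tensO b a)"
    and sym_natural: "f \<in> hom a b \<Longrightarrow> g \<in> hom c d \<Longrightarrow>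
                       comp (tensM f g) (sym b d) = comp (sym a c) (tensM g f)"
    and sym_inv: "comp (sym a b) (sym b a) = idm (tensO a b)"
    and sym_hexagon: "sym a (tensO b c) = comp (tensM (sym a b) (idm c)) (tensM (idm b) (sym a c))"
    and sym_unit: "sym unit a = idm a"
    and zero_hom: "0 \<in> hom a b"
    and plus_hom: "f \<in> hom a b \<Longrightarrow> g \<in> hom a b \<Longrightarrow> f + g \<in> hom a b"
    and comp_plus_left: "f \<in> hom a b \<Longrightarrow> g \<in> hom a b \<Longrightarrow> h \<in> hom b c \<Longrightarrow>
                       comp (f + g) h = comp f h + comp g h"
    and comp_plus_right: "f \<in> hom a b \<Longrightarrow> g \<in> hom b c \<Longrightarrow> h \<in> hom b c \<Longrightarrow>
                       comp f (g + h) = comp f g + comp f h"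
    and comp_zero_left: "h \<in> hom b c \<Longrightarrow> comp 0 h = 0"
    and comp_zero_right: "f \<in> hom a b \<Longrightarrow> comp f 0 = 0"
    and tensM_plus_left: "f \<in> hom a b \<Longrightarrow> g \<in> hom a b \<Longrightarrow> h \<in> hom c d \<Longrightarrow>
                       tensM (f + g) h = tensM f h + tensM g h"
    and tensM_plus_right: "f \<in> hom a b \<Longrightarrow> g \<in> hom c d \<Longrightarrow> h \<in> hom c d \<Longrightarrow>
                       tensM f (g + h) = tensM f g + tensM f h"
    and tensM_zero_left: "h \<in> hom c d \<Longrightarrow> tensM 0 h = 0"
    and tensM_zero_right: "f \<in> hom a b \<Longrightarrow> tensM f 0 = 0"

primrec opow :: "('o \<Rightarrow> 'o \<Rightarrow> 'o) \<Rightarrow> 'o \<Rightarrow> 'o \<Rightarrow> nat \<Rightarrow> 'o" where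
  "opow tensO unit A 0 = unit"
| "opow tensO unit A (Suc n) = tensO (opow tensO unit A n) A"

text \<open>
  Canonical symmetry isomorphism for a permutation sigma of {1..n}, moving the
  i-th factor to position sigma i.
\<close>
fun psym :: "('m \<Rightarrow> 'm \<Rightarrow> 'm) \<Rightarrow> ('o \<Rightarrow> 'm) \<Rightarrow> ('o \<Rightarrow> 'o \<Rightarrow> 'o) \<Rightarrow> ('m \<Rightarrow> 'm \<Rightarrow> 'm)
              \<Rightarrow> 'o \<Rightarrow> ('o \<Rightarrow> 'o \<Rightarrow> 'm) \<Rightarrow> 'o \<Rightarrow> nat \<Rightarrow> (nat \<Rightarrow> nat) \<Rightarrow> 'm" where
  "psym cmp idm tensO tensM unit symm A 0 \<sigma> = idm unit"
| "psym cmp idm tensO tensM unit symm A (Suc n) \<sigma> =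
     (let j = \<sigma> (Suc n);
          \<sigma>' = (\<lambda>i. if 1 \<le> i \<and> i \<le> n then (if \<sigma> i < j then \<sigma> i else \<sigma> i - 1) else i)
      in cmp (tensM (psym cmp idm tensO tensM unit symm A n \<sigma>') (idm A))
              (tensM (idm (opow tensO unit A (j - 1)))
                     (symm (opow tensO unit A (Suc n - j)) A)))"

definition Unsh :: "nat \<Rightarrow> nat \<Rightarrow> (nat \<Rightarrow> nat) set" where
  "Unsh n k = {\<sigma>. \<sigma> permutes {1..n}
      \<and> (\<forall>i j. 1 \<le> i \<and> i < j \<and> j \<le> k \<longrightarrow> inv \<sigma> i < inv \<sigma> j)
      \<and> (\<forall>i j. k < i \<and> i < j \<and> j \<le> n \<longrightarrow> inv \<sigma> i < inv \<sigma> j)}"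

definition unsh :: "('m::comm_monoid_add \<Rightarrow> 'm \<Rightarrow> 'm) \<Rightarrow> ('o \<Rightarrow> 'm) \<Rightarrow> ('o \<Rightarrow> 'o \<Rightarrow> 'o) \<Rightarrow> ('m \<Rightarrow> 'm \<Rightarrow> 'm)
              \<Rightarrow> 'o \<Rightarrow> ('o \<Rightarrow> 'o \<Rightarrow> 'm) \<Rightarrow> 'o \<Rightarrow> nat \<Rightarrow> nat \<Rightarrow> 'm" where
  "unsh cmp idm tensO tensM unit symm A n k =
     (\<Sum>\<sigma>\<in>Unsh n k. psym cmp idm tensO tensM unit symm A n \<sigma>)"

end

theory Submission
  imports Defs
begin


definition uc :: "nat \<Rightarrow> nat \<Rightarrow> (nat \<Rightarrow> nat) \<Rightarrow> bool" where
 "uc n k \<sigma> \<longleftrightarrow> \<sigma> permutes {1..n}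
   \<and> (\<forall>a b. 1 \<le> a \<longrightarrow> a < b \<longrightarrow> b \<le> n \<longrightarrow> \<sigma> a \<le> k \<longrightarrow> \<sigma> b \<le> k \<longrightarrow> \<sigma> a < \<sigma> b)
   \<and> (\<forall>a b. 1 \<le> a \<longrightarrow> a < b \<longrightarrow> b \<le> n \<longrightarrow> k < \<sigma> a \<longrightarrow> k < \<sigma> b \<longrightarrow> \<sigma> a < \<sigma> b)"

lemma Unsh_uc: assumes kn: "k \<le> n" shows "Unsh n k = {\<sigma>. uc n k \<sigma>}"
proof (intro set_eqI iffI; simp)
  fix \<sigma> assume "\<sigma> \<in> Unsh n k"
  then have p: "\<sigma> permutes {1..n}"
    and h1: "\<And>i j. 1 \<le> i \<Longrightarrow> i < j \<Longrightarrow> j \<le> k \<Longrightarrow> inv \<sigma> i < inv \<sigma> j"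
    and h2: "\<And>i j. k < i \<Longrightarrow> i < j \<Longrightarrow> j \<le> n \<Longrightarrow> inv \<sigma> i < inv \<sigma> j"
    by (auto simp: Unsh_def)
  have inv: "\<And>x. inv \<sigma> (\<sigma> x) = x" using permutes_inverses[OF p] by simp
  have img: "\<And>x. \<sigma> x \<in> {1..n} \<longleftrightarrow> x \<in> {1..n}" using permutes_in_image[OF p] by simp
  have inj: "\<And>x y. \<sigma> x = \<sigma> y \<Longrightarrow> x = y" using permutes_inj[OF p] by (simp add: inj_eq)
  show "uc n k \<sigma>" unfolding uc_def
  proof (intro conjI allI impI p)
    fix a b assume "1 \<le> a" "a < b" "b \<le> n" "\<sigma> a \<le> k" "\<sigma> b \<le> k"
    moreover have "\<sigma> a \<noteq> \<sigma> b" using \<open>a < b\<close> inj by force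
    moreover have "1 \<le> \<sigma> b" using img[of b] \<open>1 \<le> a\<close> \<open>a < b\<close> \<open>b \<le> n\<close> by auto
    ultimately show "\<sigma> a < \<sigma> b" using h1[of "\<sigma> b" "\<sigma> a"] inv by (metis linorder_neqE_nat not_less_iff_gr_or_eq)
  next
    fix a b assume "1 \<le> a" "a < b" "b \<le> n" "k < \<sigma> a" "k < \<sigma> b"
    moreover have "\<sigma> a \<noteq> \<sigma> b" using \<open>a < b\<close> inj by force
    moreover have "\<sigma> a \<le> n" using img[of a] \<open>1 \<le> a\<close> \<open>a < b\<close> \<open>b \<le> n\<close> by auto
    ultimately show "\<sigma> a < \<sigma> b" using h2[of "\<sigma> b" "\<sigma> a"] inv by (metis linorder_neqE_nat not_less_iff_gr_or_eq)
  qed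
next
  fix \<sigma> assume "uc n k \<sigma>"
  then have p: "\<sigma> permutes {1..n}"
    and h1: "\<And>a b. 1 \<le> a \<Longrightarrow> a < b \<Longrightarrow> b \<le> n \<Longrightarrow> \<sigma> a \<le> k \<Longrightarrow> \<sigma> b \<le> k \<Longrightarrow> \<sigma> a < \<sigma> b"
    and h2: "\<And>a b. 1 \<le> a \<Longrightarrow> a < b \<Longrightarrow> b \<le> n \<Longrightarrow> k < \<sigma> a \<Longrightarrow> k < \<sigma> b \<Longrightarrow> \<sigma> a < \<sigma> b"
    by (auto simp: uc_def)
  have inv: "\<And>x. \<sigma> (inv \<sigma> x) = x" using permutes_inverses[OF p] by simp
  have img: "\<And>x. inv \<sigma> x \<in> {1..n} \<longleftrightarrow> x \<in> {1..n}" using permutes_in_image[OF permutes_inv[OF p]] by simp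
  have inj: "\<And>x y. inv \<sigma> x = inv \<sigma> y \<Longrightarrow> x = y" by (metis inv)
  show "\<sigma> \<in> Unsh n k" unfolding Unsh_def
  proof (intro CollectI conjI allI impI p)
    fix i j assume a: "1 \<le> i \<and> i < j \<and> j \<le> k"
    show "inv \<sigma> i < inv \<sigma> j"
    proof (rule ccontr)
      assume "\<not> ?thesis"
      moreover have "inv \<sigma> i \<noteq> inv \<sigma> j" using a inj by force
      ultimately have "inv \<sigma> j < inv \<sigma> i" by simp
      moreover have "1 \<le> inv \<sigma> j" "inv \<sigma> i \<le> n" using img[of i] img[of j] a kn
        by auto
      ultimately have "\<sigma> (inv \<sigma> j) < \<sigma> (inv \<sigma> i)" using h1[of "inv \<sigma> j" "inv \<sigma> i"] a inv by simp
      then show False using inv a by simp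
    qed
  next
    fix i j assume a: "k < i \<and> i < j \<and> j \<le> n"
    show "inv \<sigma> i < inv \<sigma> j"
    proof (rule ccontr)
      assume "\<not> ?thesis"
      moreover have "inv \<sigma> i \<noteq> inv \<sigma> j" using a inj by force
      ultimately have "inv \<sigma> j < inv \<sigma> i" by simp
      moreover have "1 \<le> inv \<sigma> j" "inv \<sigma> i \<le> n" using img[of i] img[of j] a
        by auto
      ultimately have "\<sigma> (inv \<sigma> j) < \<sigma> (inv \<sigma> i)" using h2[of "inv \<sigma> j" "inv \<sigma> i"] a inv by simp
      then show False using inv a by simp
    qed
  qed
qed

lemma mk_perm:
  assumes "\<And>x. x \<notin> {1..n} \<Longrightarrow> f x = x" "\<And>x. x \<in> {1..n} \<Longrightarrow> f x \<in> {1..n::nat}" "inj_on f {1..n}"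
  shows "f permutes {1..n}"
proof (rule bij_imp_permutes)
  have "f ` {1..n} \<subseteq> {1..n}" using assms(2) by blast
  then have "f ` {1..n} = {1..n}" using endo_inj_surj[of "{1..n}" f] assms(3) by simp
  then show "bij_betw f {1..n} {1..n}" using assms(3) by (simp add: bij_betw_def)
qed (use assms in auto)

lemma uc_facts:
  assumes "uc n k \<sigma>"
  shows "\<And>x. x \<notin> {1..n} \<Longrightarrow> \<sigma> x = x" "\<And>x. x \<in> {1..n} \<Longrightarrow> \<sigma> x \<in> {1..n}"
    "\<And>x y. \<sigma> x = \<sigma> y \<Longrightarrow> x = y" "\<And>y. y \<in> {1..n} \<Longrightarrow> \<exists>x\<in>{1..n}. \<sigma> x = y"
  and "\<And>a b. 1 \<le> a \<Longrightarrow> a < b \<Longrightarrow> b \<le> n \<Longrightarrow> \<sigma> a \<le> k \<Longrightarrow> \<sigma> b \<le> k \<Longrightarrow> \<sigma> a < \<sigma> b"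
  and "\<And>a b. 1 \<le> a \<Longrightarrow> a < b \<Longrightarrow> b \<le> n \<Longrightarrow> k < \<sigma> a \<Longrightarrow> k < \<sigma> b \<Longrightarrow> \<sigma> a < \<sigma> b"
proof -
  have p: "\<sigma> permutes {1..n}" using assms by (simp add: uc_def)
  show "\<And>x. x \<notin> {1..n} \<Longrightarrow> \<sigma> x = x" using permutes_not_in[OF p] by simp
  show "\<And>x. x \<in> {1..n} \<Longrightarrow> \<sigma> x \<in> {1..n}" using permutes_in_image[OF p] by simp
  show "\<And>x y. \<sigma> x = \<sigma> y \<Longrightarrow> x = y" using permutes_inj[OF p] by (simp add: inj_eq)
  show "\<And>y. y \<in> {1..n} \<Longrightarrow> \<exists>x\<in>{1..n}. \<sigma> x = y"
    using permutes_inverses[OF p] permutes_in_image[OF permutes_inv[OF p]] by metis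
qed (use assms in \<open>auto simp: uc_def\<close>)

lemma last_cases:
  assumes "uc (n+1) (k+1) \<sigma>" "k + 1 \<le> n"
  shows "\<sigma> (n+1) = n+1 \<or> \<sigma> (n+1) = k+1"
proof (rule ccontr)
  note f = uc_facts[OF assms(1)]
  assume c: "\<not> ?thesis"
  define j where "j = \<sigma> (n+1)"
  have j: "j \<in> {1..n+1}" using f(2)[of "n+1"] j_def by simp
  then obtain b where b: "b \<in> {1..n+1}" "\<sigma> b = j + 1" using f(4)[of "j+1"] c j_def by auto
  have "b \<noteq> n+1" using b j_def by auto
  then have "b < n+1" using b by auto
  show False
  proof (cases "j \<le> k")
    case True
    then show False using f(5)[of b "n+1"] b \<open>b < n+1\<close> j_def by auto
  next
    case False
    then show False using f(6)[of b "n+1"] b \<open>b < n+1\<close> j_def c by auto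
  qed
qed

lemma S1_eq:
  assumes "k + 1 \<le> n"
  shows "{\<sigma>. uc (n+1) (k+1) \<sigma> \<and> \<sigma> (n+1) = n+1} = {\<sigma>. uc n (k+1) \<sigma>}"
proof (intro set_eqI iffI; simp)
  fix \<sigma> assume a: "uc (Suc n) (Suc k) \<sigma> \<and> \<sigma> (Suc n) = Suc n"
  then have u: "uc (n+1) (k+1) \<sigma>" by simp
  note f = uc_facts[OF u]
  have "\<sigma> permutes {1..n}"
  proof (rule mk_perm)
    show "\<And>x. x \<notin> {1..n} \<Longrightarrow> \<sigma> x = x" using f(1) a by (metis atLeastAtMost_iff le_Suc_eq Suc_eq_plus1)
    show "\<And>x. x \<in> {1..n} \<Longrightarrow> \<sigma> x \<in> {1..n}"
    proof -
      fix x assume x: "x \<in> {1..n}"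
      then have "\<sigma> x \<noteq> n+1" using a f(3)[of x "n+1"] by auto
      then show "\<sigma> x \<in> {1..n}" using f(2)[of x] x by auto
    qed
    show "inj_on \<sigma> {1..n}" using f(3) by (meson inj_onI)
  qed
  then show "uc n (Suc k) \<sigma>" using f(5,6) unfolding uc_def by auto
next
  fix \<sigma> assume u: "uc n (Suc k) \<sigma>"
  note f = uc_facts[OF u]
  have p: "\<sigma> permutes {1..n}" using u by (simp add: uc_def)
  have fix1: "\<sigma> (Suc n) = Suc n" using f(1) by simp
  have "\<sigma> permutes {1..Suc n}" using permutes_subset[OF p] by auto
  moreover have "\<forall>a b. 1 \<le> a \<longrightarrow> a < b \<longrightarrow> b \<le> Suc n \<longrightarrow> \<sigma> a \<le> Suc k \<longrightarrow> \<sigma> b \<le> Suc k \<longrightarrow> \<sigma> a < \<sigma> b"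
    using f(5) fix1 assms by (metis Suc_eq_plus1 le_Suc_eq not_less_eq_eq)
  moreover have "\<forall>a b. 1 \<le> a \<longrightarrow> a < b \<longrightarrow> b \<le> Suc n \<longrightarrow> Suc k < \<sigma> a \<longrightarrow> Suc k < \<sigma> b \<longrightarrow> \<sigma> a < \<sigma> b"
  proof (intro allI impI)
    fix a b assume h: "1 \<le> a" "a < b" "b \<le> Suc n" "Suc k < \<sigma> a" "Suc k < \<sigma> b"
    show "\<sigma> a < \<sigma> b"
    proof (cases "b = Suc n")
      case True
      then show ?thesis using f(2)[of a] h fix1 by auto
    next
      case False
      then show ?thesis using f(6) h by auto
    qed
  qed
  ultimately show "uc (Suc n) (Suc k) \<sigma> \<and> \<sigma> (Suc n) = Suc n" using fix1 unfolding uc_def by simp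
qed

definition res :: "nat \<Rightarrow> nat \<Rightarrow> (nat \<Rightarrow> nat) \<Rightarrow> nat \<Rightarrow> nat" where
  "res n j \<sigma> = (\<lambda>i. if 1 \<le> i \<and> i \<le> n then (if \<sigma> i < j then \<sigma> i else \<sigma> i - 1) else i)"

definition ext :: "nat \<Rightarrow> nat \<Rightarrow> (nat \<Rightarrow> nat) \<Rightarrow> nat \<Rightarrow> nat" where
  "ext n k \<tau> = (\<lambda>i. if i = n+1 then k+1 else if 1 \<le> i \<and> i \<le> n then (if \<tau> i \<le> k then \<tau> i else \<tau> i + 1) else i)"

lemma S2_res:
  assumes u: "uc (n+1) (k+1) \<sigma>" and l: "\<sigma> (n+1) = k+1" and kn: "k + 1 \<le> n"
  shows "uc n k (res n (k+1) \<sigma>)" "ext n k (res n (k+1) \<sigma>) = \<sigma>"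
proof -
  note f = uc_facts[OF u]
  have ne: "\<And>x. x \<in> {1..n} \<Longrightarrow> \<sigma> x \<noteq> k+1" using f(3)[of _ "n+1"] l by fastforce
  have rng: "\<And>x. x \<in> {1..n} \<Longrightarrow> \<sigma> x \<in> {1..n+1}" using f(2) by auto
  let ?r = "res n (k+1) \<sigma>"
  have "?r permutes {1..n}"
  proof (rule mk_perm)
    show "\<And>x. x \<notin> {1..n} \<Longrightarrow> ?r x = x" by (auto simp add: res_def)
    show "\<And>x. x \<in> {1..n} \<Longrightarrow> ?r x \<in> {1..n}"
    proof -
      fix x assume x: "x \<in> {1..n}"
      show "?r x \<in> {1..n}" using ne[OF x] rng[OF x] x kn by (auto simp: res_def)
    qed
    show "inj_on ?r {1..n}"
    proof (rule inj_onI)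
      fix x y assume x: "x \<in> {1..n}" and y: "y \<in> {1..n}" and e: "?r x = ?r y"
      have "\<sigma> x = \<sigma> y" using e ne[OF x] ne[OF y] rng[OF x] rng[OF y] x y
        by (auto simp: res_def split: if_splits)
      then show "x = y" using f(3) by blast
    qed
  qed
  moreover have "\<forall>a b. 1 \<le> a \<longrightarrow> a < b \<longrightarrow> b \<le> n \<longrightarrow> ?r a \<le> k \<longrightarrow> ?r b \<le> k \<longrightarrow> ?r a < ?r b"
  proof (intro allI impI)
    fix a b assume h: "1 \<le> a" "a < b" "b \<le> n" "?r a \<le> k" "?r b \<le> k"
    have a: "a \<in> {1..n}" and b: "b \<in> {1..n}" using h by auto
    have "\<sigma> a \<le> k" "\<sigma> b \<le> k" using h(4,5) ne[OF a] ne[OF b] a b by (auto simp: res_def split: if_splits)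
    then have "\<sigma> a < \<sigma> b" using f(5)[of a b] h by auto
    then show "?r a < ?r b" using a b \<open>\<sigma> a \<le> k\<close> \<open>\<sigma> b \<le> k\<close> by (auto simp: res_def)
  qed
  moreover have "\<forall>a b. 1 \<le> a \<longrightarrow> a < b \<longrightarrow> b \<le> n \<longrightarrow> k < ?r a \<longrightarrow> k < ?r b \<longrightarrow> ?r a < ?r b"
  proof (intro allI impI)
    fix a b assume h: "1 \<le> a" "a < b" "b \<le> n" "k < ?r a" "k < ?r b"
    have a: "a \<in> {1..n}" and b: "b \<in> {1..n}" using h by auto
    have "k+1 < \<sigma> a" "k+1 < \<sigma> b" using h(4,5) ne[OF a] ne[OF b] a b by (auto simp: res_def split: if_splits)
    then have "\<sigma> a < \<sigma> b" using f(6)[of a b] h by auto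
    then show "?r a < ?r b" using a b \<open>k+1 < \<sigma> a\<close> \<open>k+1 < \<sigma> b\<close> by (auto simp: res_def)
  qed
  ultimately show "uc n k ?r" unfolding uc_def by blast
  show "ext n k ?r = \<sigma>"
  proof
    fix x
    show "ext n k ?r x = \<sigma> x"
    proof (cases "x \<in> {1..n}")
      case True
      then show ?thesis using ne[OF True] rng[OF True] by (auto simp: res_def ext_def)
    next
      case False
      then show ?thesis using f(1)[of x] l by (auto simp: res_def ext_def)
    qed
  qed
qed

lemma S2_ext:
  assumes u: "uc n k \<tau>" and kn: "k + 1 \<le> n"
  shows "uc (n+1) (k+1) (ext n k \<tau>)" "ext n k \<tau> (n+1) = k+1" "res n (k+1) (ext n k \<tau>) = \<tau>"
proof -
  note f = uc_facts[OF u]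
  let ?e = "ext n k \<tau>"
  show l: "?e (n+1) = k+1" by (simp add: ext_def)
  have "?e permutes {1..n+1}"
  proof (rule mk_perm)
    show "\<And>x. x \<notin> {1..n+1} \<Longrightarrow> ?e x = x" by (auto simp: ext_def)
    show "\<And>x. x \<in> {1..n+1} \<Longrightarrow> ?e x \<in> {1..n+1}"
    proof -
      fix x assume x: "x \<in> {1..n+1}"
      show "?e x \<in> {1..n+1}"
      proof (cases "x = n+1")
        case True then show ?thesis using kn by (simp add: ext_def)
      next
        case False
        then have "x \<in> {1..n}" using x by auto
        then show ?thesis using f(2)[of x] by (auto simp: ext_def)
      qed
    qed
    show "inj_on ?e {1..n+1}"
    proof (rule inj_onI)
      fix x y assume x: "x \<in> {1..n+1}" and y: "y \<in> {1..n+1}" and e: "?e x = ?e y"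
      show "x = y"
      proof (cases "x = n+1 \<or> y = n+1")
        case True
        then show ?thesis using e x y f(2)[of x] f(2)[of y] by (auto simp: ext_def split: if_splits)
      next
        case False
        then have "x \<in> {1..n}" "y \<in> {1..n}" using x y by auto
        then have "\<tau> x = \<tau> y" using e False by (auto simp: ext_def split: if_splits)
        then show "x = y" using f(3) by blast
      qed
    qed
  qed
  moreover have "\<forall>a b. 1 \<le> a \<longrightarrow> a < b \<longrightarrow> b \<le> n+1 \<longrightarrow> ?e a \<le> k+1 \<longrightarrow> ?e b \<le> k+1 \<longrightarrow> ?e a < ?e b"
  proof (intro allI impI)
    fix a b assume h: "1 \<le> a" "a < b" "b \<le> n+1" "?e a \<le> k+1" "?e b \<le> k+1"
    have a: "a \<in> {1..n}" using h by auto
    show "?e a < ?e b"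
    proof (cases "b = n+1")
      case True
      then show ?thesis using h(4) a by (auto simp: ext_def split: if_splits)
    next
      case False
      then have b: "b \<in> {1..n}" using h by auto
      have "\<tau> a \<le> k" "\<tau> b \<le> k" using h(4,5) a b kn by (auto simp: ext_def split: if_splits)
      then show ?thesis using f(5)[of a b] h a b kn by (auto simp: ext_def)
    qed
  qed
  moreover have "\<forall>a b. 1 \<le> a \<longrightarrow> a < b \<longrightarrow> b \<le> n+1 \<longrightarrow> k+1 < ?e a \<longrightarrow> k+1 < ?e b \<longrightarrow> ?e a < ?e b"
  proof (intro allI impI)
    fix a b assume h: "1 \<le> a" "a < b" "b \<le> n+1" "k+1 < ?e a" "k+1 < ?e b"
    have a: "a \<in> {1..n}" using h by auto
    have "b \<noteq> n+1" using h(5) by (auto simp: ext_def)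
    then have b: "b \<in> {1..n}" using h by auto
    have "k < \<tau> a" "k < \<tau> b" using h(4,5) a b kn by (auto simp: ext_def split: if_splits)
    then show "?e a < ?e b" using f(6)[of a b] h a b kn by (auto simp: ext_def)
  qed
  ultimately show "uc (n+1) (k+1) ?e" unfolding uc_def by blast
  show "res n (k+1) ?e = \<tau>"
  proof
    fix x
    show "res n (k+1) ?e x = \<tau> x"
    proof (cases "x \<in> {1..n}")
      case True
      then show ?thesis by (auto simp: res_def ext_def)
    next
      case False
      then show ?thesis using f(1)[of x] by (auto simp: res_def ext_def)
    qed
  qed
qed



context add_sym_mon_cat begin

lemma opow_add: "tensO (opow tensO unit A a) (opow tensO unit A b) = opow tensO unit A (a+b)"
  by (induction b) (simp_all add: tensO_unit_right tensO_assoc[symmetric])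

lemma psym_hom:
  "\<sigma> ` {1..n} \<subseteq> {1..n} \<Longrightarrow> inj_on \<sigma> {1..n} \<Longrightarrow>
   psym comp idm tensO tensM unit sym A n \<sigma> \<in> hom (opow tensO unit A n) (opow tensO unit A n)"
proof (induction n arbitrary: \<sigma>)
  case 0
  then show ?case by (simp add: id_hom)
next
  case (Suc n)
  define j where "j = \<sigma> (Suc n)"
  define \<sigma>' where "\<sigma>' = (\<lambda>i. if 1 \<le> i \<and> i \<le> n then (if \<sigma> i < j then \<sigma> i else \<sigma> i - 1) else i)"
  have "j \<in> {1..Suc n}" unfolding j_def by (rule subsetD[OF Suc.prems(1)]) auto
  then have j: "1 \<le> j" "j \<le> Suc n" by auto
  have ne: "\<And>i. i \<in> {1..n} \<Longrightarrow> \<sigma> i \<noteq> j"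
    using Suc.prems(2) j_def by (auto dest: inj_onD)
  have rng: "\<And>i. i \<in> {1..n} \<Longrightarrow> \<sigma> i \<in> {1..Suc n}"
  proof -
    fix i assume "i \<in> {1..n}"
    then show "\<sigma> i \<in> {1..Suc n}" by (intro subsetD[OF Suc.prems(1)]) auto
  qed
  have "\<sigma>' ` {1..n} \<subseteq> {1..n}"
  proof
    fix y assume "y \<in> \<sigma>' ` {1..n}"
    then obtain i where i: "i \<in> {1..n}" "y = \<sigma>' i" by auto
    show "y \<in> {1..n}" using ne[OF i(1)] rng[OF i(1)] i j by (auto simp: \<sigma>'_def)
  qed
  moreover have "inj_on \<sigma>' {1..n}"
  proof (rule inj_onI)
    fix x y assume x: "x \<in> {1..n}" and y: "y \<in> {1..n}" and e: "\<sigma>' x = \<sigma>' y"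
    have "\<sigma> x = \<sigma> y" using e ne[OF x] ne[OF y] rng[OF x] rng[OF y] x y
      by (auto simp: \<sigma>'_def split: if_splits)
    then show "x = y" using Suc.prems(2) x y by (auto dest: inj_onD)
  qed
  ultimately have IH: "psym comp idm tensO tensM unit sym A n \<sigma>' \<in> hom (opow tensO unit A n) (opow tensO unit A n)"
    using Suc.IH by blast
  have h1: "tensM (psym comp idm tensO tensM unit sym A n \<sigma>') (idm A) \<in> hom (opow tensO unit A (Suc n)) (opow tensO unit A (Suc n))"
    using tensM_hom[OF IH id_hom] by simp
  have h2: "tensM (idm (opow tensO unit A (j - 1))) (sym (opow tensO unit A (Suc n - j)) A)
     \<in> hom (tensO (opow tensO unit A (j - 1)) (tensO (opow tensO unit A (Suc n - j)) A))
           (tensO (opow tensO unit A (j - 1)) (tensO A (opow tensO unit A (Suc n - j))))"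
    by (rule tensM_hom[OF id_hom sym_hom])
  have e1: "tensO (opow tensO unit A (j - 1)) (tensO (opow tensO unit A (Suc n - j)) A) = opow tensO unit A (Suc n)"
    using j by (simp add: tensO_assoc[symmetric] opow_add)
  have e2: "tensO (opow tensO unit A (j - 1)) (tensO A (opow tensO unit A (Suc n - j))) = opow tensO unit A (Suc n)"
  proof -
    have "tensO (opow tensO unit A (j - 1)) A = opow tensO unit A j" using j
      by (cases j) auto
    then show ?thesis using j by (simp add: tensO_assoc[symmetric] opow_add)
  qed
  have eq: "psym comp idm tensO tensM unit sym A (Suc n) \<sigma> = comp (tensM (psym comp idm tensO tensM unit sym A n \<sigma>') (idm A))
     (tensM (idm (opow tensO unit A (j - 1))) (sym (opow tensO unit A (Suc n - j)) A))"
    unfolding psym.simps Let_def j_def \<sigma>'_def by (rule refl)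
  show ?case unfolding eq using comp_hom[OF h1 h2[unfolded e1 e2]] .
qed

lemma sum_hom: "(\<And>x. x \<in> S \<Longrightarrow> f x \<in> hom a b) \<Longrightarrow> sum f S \<in> hom a b"
proof (induction S rule: infinite_finite_induct)
qed (auto simp: zero_hom plus_hom)

lemma tens_sum: "finite S \<Longrightarrow> (\<And>x. x \<in> S \<Longrightarrow> f x \<in> hom a b) \<Longrightarrow> h \<in> hom c d \<Longrightarrow>
   tensM (sum f S) h = (\<Sum>x\<in>S. tensM (f x) h)"
proof (induction S rule: finite_induct)
  case empty then show ?case by (simp add: tensM_zero_left)
next
  case (insert x F)
  have "sum f F \<in> hom a b" using insert by (intro sum_hom) auto
  moreover have "f x \<in> hom a b" using insert by auto
  ultimately have "tensM (f x + sum f F) h = tensM (f x) h + tensM (sum f F) h"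
    using insert.prems(2) by (metis tensM_plus_left)
  moreover have "tensM (sum f F) h = (\<Sum>x\<in>F. tensM (f x) h)" using insert by auto
  ultimately show ?case unfolding sum.insert[OF insert.hyps] by (simp only:)
qed

lemma comp_sum: "finite S \<Longrightarrow> (\<And>x. x \<in> S \<Longrightarrow> f x \<in> hom a b) \<Longrightarrow> h \<in> hom b c \<Longrightarrow>
   comp (sum f S) h = (\<Sum>x\<in>S. comp (f x) h)"
proof (induction S rule: finite_induct)
  case empty then show ?case by (simp add: comp_zero_left)
next
  case (insert x F)
  have "sum f F \<in> hom a b" using insert by (intro sum_hom) auto
  moreover have "f x \<in> hom a b" using insert by auto
  ultimately have "comp (f x + sum f F) h = comp (f x) h + comp (sum f F) h"
    using insert.prems(2) by (metis comp_plus_left)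
  moreover have "comp (sum f F) h = (\<Sum>x\<in>F. comp (f x) h)" using insert by auto
  ultimately show ?case unfolding sum.insert[OF insert.hyps] by (simp only:)
qed

lemma uc_psym_hom: "uc n k \<sigma> \<Longrightarrow> psym comp idm tensO tensM unit sym A n \<sigma> \<in> hom (opow tensO unit A n) (opow tensO unit A n)"
proof -
  assume u: "uc n k \<sigma>"
  have "\<sigma> ` {1..n} \<subseteq> {1..n}" using uc_facts(2)[OF u] by (rule image_subsetI)
  moreover have "inj_on \<sigma> {1..n}" using uc_facts(3)[OF u] by (rule inj_onI)
  ultimately show ?thesis by (rule psym_hom)
qed

lemma psym_S1:
  assumes u: "uc n k \<sigma>"
  shows "psym comp idm tensO tensM unit sym A (Suc n) \<sigma> = tensM (psym comp idm tensO tensM unit sym A n \<sigma>) (idm A)"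
proof -
  note f = uc_facts[OF u]
  have l: "\<sigma> (Suc n) = Suc n" using f(1) by simp
  have e: "(\<lambda>i. if 1 \<le> i \<and> i \<le> n then (if \<sigma> i < Suc n then \<sigma> i else \<sigma> i - 1) else i) = \<sigma>"
  proof
    fix i show "(if 1 \<le> i \<and> i \<le> n then (if \<sigma> i < Suc n then \<sigma> i else \<sigma> i - 1) else i) = \<sigma> i"
      using f(1)[of i] f(2)[of i] by auto
  qed
  have X: "tensM (psym comp idm tensO tensM unit sym A n \<sigma>) (idm A) \<in> hom (opow tensO unit A (Suc n)) (opow tensO unit A (Suc n))"
    using tensM_hom[OF uc_psym_hom[OF u] id_hom] by simp
  have "psym comp idm tensO tensM unit sym A (Suc n) \<sigma> =
     comp (tensM (psym comp idm tensO tensM unit sym A n \<sigma>) (idm A)) (tensM (idm (opow tensO unit A n)) (sym unit A))"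
    unfolding psym.simps Let_def l e by simp
  also have "\<dots> = comp (tensM (psym comp idm tensO tensM unit sym A n \<sigma>) (idm A)) (idm (opow tensO unit A (Suc n)))"
    by (simp add: sym_unit tensM_id)
  also have "\<dots> = tensM (psym comp idm tensO tensM unit sym A n \<sigma>) (idm A)"
    using X by (rule id_right)
  finally show ?thesis .
qed

lemma psym_S2:
  assumes l: "\<sigma> (Suc n) = Suc k" and kn: "k \<le> n"
  shows "psym comp idm tensO tensM unit sym A (Suc n) \<sigma> =
    comp (tensM (psym comp idm tensO tensM unit sym A n (res n (k+1) \<sigma>)) (idm A))
         (tensM (idm (opow tensO unit A k)) (sym (opow tensO unit A (n - k)) A))"
  using l by (simp add: Let_def res_def)

end


theorem proposition3p19:
  fixes hom :: "'o \<Rightarrow> 'o \<Rightarrow> 'm::comm_monoid_add set"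
    and cmp :: "'m \<Rightarrow> 'm \<Rightarrow> 'm"
    and idm :: "'o \<Rightarrow> 'm"
    and tensO :: "'o \<Rightarrow> 'o \<Rightarrow> 'o"
    and tensM :: "'m \<Rightarrow> 'm \<Rightarrow> 'm"
    and unit :: "'o"
    and symm :: "'o \<Rightarrow> 'o \<Rightarrow> 'm"
    and A :: 'o and n k :: nat
  assumes "add_sym_mon_cat hom cmp idm tensO tensM unit symm"
    and "1 \<le> n" and "k \<le> n - 1"
  shows "unsh cmp idm tensO tensM unit symm A (n + 1) (k + 1) =
           tensM (unsh cmp idm tensO tensM unit symm A n (k + 1)) (idm A)
         + cmp (tensM (unsh cmp idm tensO tensM unit symm A n k) (idm A))
                (tensM (idm (opow tensO unit A k)) (symm (opow tensO unit A (n - k)) A))"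
proof -
  interpret C: add_sym_mon_cat hom cmp idm tensO tensM unit symm by fact
  have kn: "k + 1 \<le> n" using assms(2,3) by auto
  define P where "P = psym cmp idm tensO tensM unit symm A"
  define U where "U = {\<sigma>. uc (n+1) (k+1) \<sigma>}"
  define S1 where "S1 = {\<sigma>\<in>U. \<sigma> (n+1) = n+1}"
  define S2 where "S2 = {\<sigma>\<in>U. \<sigma> (n+1) = k+1}"
  define T1 where "T1 = {\<sigma>. uc n (k+1) \<sigma>}"
  define T2 where "T2 = {\<sigma>. uc n k \<sigma>}"
  define G where "G = tensM (idm (opow tensO unit A k)) (symm (opow tensO unit A (n - k)) A)"
  have finp: "\<And>m j. finite {\<sigma>. uc m j \<sigma>}"
    by (rule finite_subset[OF _ finite_permutations[of "{1..m}" for m]]) (auto simp: uc_def)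
  have finU: "finite U" and fin1: "finite S1" and fin2: "finite S2" and finT1: "finite T1" and finT2: "finite T2"
    unfolding U_def S1_def S2_def T1_def T2_def using finp by auto
  have Usplit: "U = S1 \<union> S2" unfolding S1_def S2_def U_def using last_cases[OF _ kn] by auto
  have disj: "S1 \<inter> S2 = {}" unfolding S1_def S2_def using kn by auto
  have L: "unsh cmp idm tensO tensM unit symm A (n + 1) (k + 1) = sum (P (Suc n)) U"
    unfolding unsh_def P_def U_def using Unsh_uc[of "k+1" "n+1"] kn by simp
  also have "\<dots> = sum (P (Suc n)) S1 + sum (P (Suc n)) S2"
    unfolding Usplit using fin1 fin2 disj by (rule sum.union_disjoint)
  also have "sum (P (Suc n)) S1 = tensM (unsh cmp idm tensO tensM unit symm A n (k + 1)) (idm A)"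
  proof -
    have "S1 = T1" unfolding S1_def U_def T1_def using S1_eq[OF kn] by simp
    then have "sum (P (Suc n)) S1 = (\<Sum>\<sigma>\<in>T1. tensM (P n \<sigma>) (idm A))"
      unfolding P_def T1_def using C.psym_S1 by (intro sum.cong) auto
    also have "\<dots> = tensM (sum (P n) T1) (idm A)"
      unfolding P_def T1_def
      by (rule C.tens_sum[symmetric, OF finp _ C.id_hom]) (auto intro: C.uc_psym_hom)
    finally show ?thesis unfolding unsh_def P_def T1_def using Unsh_uc[of "k+1" n] kn by simp
  qed
  also have "sum (P (Suc n)) S2 = cmp (tensM (unsh cmp idm tensO tensM unit symm A n k) (idm A)) G"
  proof -
    have "sum (P (Suc n)) S2 = (\<Sum>\<tau>\<in>T2. cmp (tensM (P n \<tau>) (idm A)) G)"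
    proof (rule sum.reindex_bij_witness[where i = "ext n k" and j = "res n (k+1)"])
      fix a assume "a \<in> S2"
      then have a: "uc (n+1) (k+1) a" "a (n+1) = k+1" unfolding S2_def U_def by auto
      show "ext n k (res n (k + 1) a) = a" using S2_res(2)[OF a kn] .
      show "res n (k + 1) a \<in> T2" using S2_res(1)[OF a kn] unfolding T2_def by simp
      show "cmp (tensM (P n (res n (k + 1) a)) (idm A)) G = P (Suc n) a"
        unfolding P_def G_def using C.psym_S2[of a n k A] a kn by simp
    next
      fix b assume "b \<in> T2"
      then have b: "uc n k b" unfolding T2_def by simp
      show "res n (k + 1) (ext n k b) = b" using S2_ext(3)[OF b kn] .
      show "ext n k b \<in> S2" using S2_ext(1,2)[OF b kn] unfolding S2_def U_def by simp
    qed
    also have "\<dots> = cmp (\<Sum>\<tau>\<in>T2. tensM (P n \<tau>) (idm A)) G"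
    proof (rule C.comp_sum[symmetric, OF finT2])
      fix \<tau> assume "\<tau> \<in> T2"
      then show "tensM (P n \<tau>) (idm A) \<in> hom (opow tensO unit A (Suc n)) (opow tensO unit A (Suc n))"
        unfolding T2_def P_def using C.tensM_hom[OF C.uc_psym_hom C.id_hom] by simp
    next
      have "G \<in> hom (tensO (opow tensO unit A k) (tensO (opow tensO unit A (n - k)) A))
                     (tensO (opow tensO unit A k) (tensO A (opow tensO unit A (n - k))))"
        unfolding G_def by (rule C.tensM_hom[OF C.id_hom C.sym_hom])
      moreover have "tensO (opow tensO unit A k) (tensO (opow tensO unit A (n - k)) A) = opow tensO unit A (Suc n)"
        using kn by (simp add: C.tensO_assoc[symmetric] C.opow_add)
      ultimately show "G \<in> hom (opow tensO unit A (Suc n)) (tensO (opow tensO unit A k) (tensO A (opow tensO unit A (n - k))))"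
        by simp
    qed
    also have "(\<Sum>\<tau>\<in>T2. tensM (P n \<tau>) (idm A)) = tensM (sum (P n) T2) (idm A)"
      unfolding P_def T2_def
      by (rule C.tens_sum[symmetric, OF finp _ C.id_hom]) (auto intro: C.uc_psym_hom)
    finally show ?thesis unfolding unsh_def P_def T2_def using Unsh_uc[of k n] kn by simp
  qed
  finally show ?thesis unfolding G_def .
qed

end
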